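(* Let $\mathcal X,\mathcal Y$ be complex Hilbert spaces and $A:\mathcal X\supset\operatorname{dom}A\to\mathcal Y$ a closed, densely defined linear operator with $\|Ax\|_{\mathcal Y}\ge c\|x\|_{\mathcal X}$ for some $c>0$ and all $x\in\operatorname{dom}A$. Let $\mathcal X_h$ be $\operatorname{dom}A$ with inner product $\langle Ax,Ay\rangle_{\mathcal Y}$, $\mathcal Y_1=\operatorname{ran}A$ with the inner product of $\mathcal Y$ (so $A:\mathcal X_h\to\mathcal Y_1$ is an isometric isomorphism), and $\mathcal Z_h=\mathcal X_h\times\mathcal X$. Let $B:\mathcal Y\supset\operatorname{dom}B\to\mathcal X$ be closed, densely defined with $A^*\subset-B$, and $B_{\mathcal Y_1}$ the restriction of $B$ to $\operatorname{dom}B\cap\mathcal Y_1$ viewed as an operator $\mathcal Y_1\to\mathcal X$. Let $\mathcal A$ on $\mathcal Z_h$ be given by $\operatorname{dom}\mathcal A=\{(z_1,z_2)\in\mathcal X_h\times\mathcal X_h: Az_1\in\operatorname{dom}B\}$, $\mathcal A(z_1,z_2)=(z_2,BAz_1)$, and define $\mathcal B_1$ on $\mathcal Y_1\times\mathcal X$ (product inner product) by $\operatorname{dom}\mathcal B_1=\operatorname{dom}B_{\mathcal Y_1}\times\mathcal X_h$, $\mathcal B_1(v,w)=(Aw,\ Bv)$; equivalently $\mathcal B_1=\operatorname{diag}(A,I)\,\mathcal A\,\operatorname{diag}(A^{-1},I)$. Let $\mathcal G_1,\mathcal G_2$ be Hilbert spaces and $\Lambda=(\Lambda_1,\Lambda_2):\operatorname{dom}A\to\mathcal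 G_1\times\mathcal G_2^*$, $\Pi=(\Pi_1,\Pi_2):\operatorname{dom}B\to\mathcal G_1^*\times\mathcal G_2$ surjective linear maps with $-\langle By,x\rangle_{\mathcal X}-\langle y,Ax\rangle_{\mathcal Y}=\langle\Pi_1y,\Lambda_1x\rangle_{\mathcal G_1^*,\mathcal G_1}-\langle\Pi_2y,\Lambda_2x\rangle_{\mathcal G_2,\mathcal G_2^*}$ for all $y\in\operatorname{dom}B$, $x\in\operatorname{dom}A$. Let $\mathcal G=\mathcal G_1\times\mathcal G_2$, $\mathcal G^*=\mathcal G_1^*\times\mathcal G_2^*$, and on $\operatorname{dom}\mathcal A$ let $\Gamma_0(z_1,z_2)=(\Lambda_1z_2,\Pi_2Az_1)$, $\Gamma_1(z_1,z_2)=(-\Pi_1Az_1,\Lambda_2z_2)$. Define on $\operatorname{dom}\mathcal B_1$ $\Xi_0(v,w)=(\Lambda_1w,\ \Pi_2v)\in\mathcal G$, $\Xi_1(v,w)=(-\Pi_1v,\ \Lambda_2w)\in\mathcal G^*$. Then $(\mathcal G,\Xi_0,\Xi_1)$ is a boundary triplet for $\mathcal B_1$, i.e. $(\Xi_0,\Xi_1):\operatorname{dom}\mathcal B_1\to\mathcal G\times\mathcal G^*$ is surjective and $\langle\mathcal B_1f,g\rangle_{\mathcal Y_1\times\mathcal X}+\langle f,\mathcal B_1g\rangle_{\mathcal Y_1\times\mathcal X}=\langle\Xi_1f,\Xi_0g\rangle_{\mathcal G^*,\mathcal G}+\langle\Xi_0f,\Xi_1g\rangle_{\mathcal G,\mathcal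 G^*}$ for all $f,g\in\operatorname{dom}\mathcal B_1$. In particular $\Xi_i=\Gamma_i\operatorname{diag}(A^{-1},I)$ for $i=0,1$.
   Context: All Hilbert spaces are complex; $\mathcal H^*$ denotes the anti-dual of a Hilbert space $\mathcal H$, $\langle\cdot,\cdot\rangle_{\mathcal H^*,\mathcal H}$ the duality pairing and $\langle h,\phi\rangle_{\mathcal H,\mathcal H^*}:=\overline{\langle\phi,h\rangle_{\mathcal H^*,\mathcal H}}$. *)

theory Defs
  imports "HOL-Analysis.Analysis"
begin

text \<open>A complex Hilbert space is modelled on a type with addition (ab_group_add)
together with a complex scalar multiplication and a complex inner product,
which is linear in the FIRST argument and conjugate-linear in the second.\<close>

record 'a hilb =
  hsc :: "complex \<Rightarrow> 'a \<Rightarrow> 'a"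
  hip :: "'a \<Rightarrow> 'a \<Rightarrow> complex"

definition hnorm :: "('a, 'b) hilb_scheme \<Rightarrow> 'a \<Rightarrow> real" where
  "hnorm H x = sqrt (Re (hip H x x))"

definition complex_hilbert :: "('a::ab_group_add, 'b) hilb_scheme \<Rightarrow> bool" where
  "complex_hilbert H \<longleftrightarrow>
     (\<forall>a b x. hsc H (a + b) x = hsc H a x + hsc H b x) \<and>
     (\<forall>a x y. hsc H a (x + y) = hsc H a x + hsc H a y) \<and>
     (\<forall>a b x. hsc H (a * b) x = hsc H a (hsc H b x)) \<and>
     (\<forall>x. hsc H 1 x = x) \<and>
     (\<forall>x y z. hip H (x + y) z = hip H x z + hip H y z) \<and>
     (\<forall>c x y. hip H (hsc H c x) y = c * hip H x y) \<and>
     (\<forall>x y. hip H y x = cnj (hip H x y)) \<and>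
     (\<forall>x. x \<noteq> 0 \<longrightarrow> Re (hip H x x) > 0) \<and>
     (\<forall>s. (\<forall>e>0. \<exists>N. \<forall>m\<ge>N. \<forall>n\<ge>N. hnorm H (s m - s n) < e) \<longrightarrow>
          (\<exists>l. (\<lambda>n. hnorm H (s n - l)) \<longlonglongrightarrow> 0))"

definition hsubspace :: "('a::ab_group_add, 'b) hilb_scheme \<Rightarrow> 'a set \<Rightarrow> bool" where
  "hsubspace H D \<longleftrightarrow> 0 \<in> D \<and> (\<forall>x\<in>D. \<forall>y\<in>D. x + y \<in> D) \<and>
     (\<forall>c. \<forall>x\<in>D. hsc H c x \<in> D)"

definition hlinear_on ::
  "('a::ab_group_add, 'b) hilb_scheme \<Rightarrow> ('c::ab_group_add, 'd) hilb_scheme \<Rightarrow> 'a set \<Rightarrow> ('a \<Rightarrow> 'c) \<Rightarrow> bool" where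
  "hlinear_on H K D f \<longleftrightarrow> hsubspace H D \<and>
     (\<forall>x\<in>D. \<forall>y\<in>D. f (x + y) = f x + f y) \<and>
     (\<forall>c. \<forall>x\<in>D. f (hsc H c x) = hsc K c (f x))"

definition hdense :: "('a::ab_group_add, 'b) hilb_scheme \<Rightarrow> 'a set \<Rightarrow> bool" where
  "hdense H D \<longleftrightarrow> (\<forall>x. \<forall>e>0. \<exists>d\<in>D. hnorm H (x - d) < e)"

definition hclosed_op ::
  "('a::ab_group_add, 'b) hilb_scheme \<Rightarrow> ('c::ab_group_add, 'd) hilb_scheme \<Rightarrow> 'a set \<Rightarrow> ('a \<Rightarrow> 'c) \<Rightarrow> bool" where
  "hclosed_op H K D f \<longleftrightarrow>
     (\<forall>s x y. (\<forall>n. s n \<in> D) \<longrightarrow> (\<lambda>n. hnorm H (s n - x)) \<longlonglongrightarrow> 0 \<longrightarrow>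
        (\<lambda>n. hnorm K (f (s n) - y)) \<longlonglongrightarrow> 0 \<longrightarrow> x \<in> D \<and> f x = y)"

definition adj_dom ::
  "('a::ab_group_add, 'b) hilb_scheme \<Rightarrow> ('c::ab_group_add, 'd) hilb_scheme \<Rightarrow> 'a set \<Rightarrow> ('a \<Rightarrow> 'c) \<Rightarrow> 'c set" where
  "adj_dom H K D A = {y. \<exists>w. \<forall>x\<in>D. hip K (A x) y = hip H x w}"

definition adj_op ::
  "('a::ab_group_add, 'b) hilb_scheme \<Rightarrow> ('c::ab_group_add, 'd) hilb_scheme \<Rightarrow> 'a set \<Rightarrow> ('a \<Rightarrow> 'c) \<Rightarrow> 'c \<Rightarrow> 'a" where
  "adj_op H K D A y = (THE w. \<forall>x\<in>D. hip K (A x) y = hip H x w)"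

definition adj_subset_neg ::
  "('a::ab_group_add, 'b) hilb_scheme \<Rightarrow> ('c::ab_group_add, 'd) hilb_scheme \<Rightarrow> 'a set \<Rightarrow> ('a \<Rightarrow> 'c)
    \<Rightarrow> 'c set \<Rightarrow> ('c \<Rightarrow> 'a) \<Rightarrow> bool" where
  "adj_subset_neg H K DA A DB B \<longleftrightarrow>
     adj_dom H K DA A \<subseteq> DB \<and> (\<forall>y\<in>adj_dom H K DA A. B y = - adj_op H K DA A y)"

text \<open>The anti-dual of H: bounded conjugate-linear functionals on H, with the vector
structure (\<phi> + \<psi>)(h) = \<phi> h + \<psi> h, (c \<phi>)(h) = c * \<phi> h.  The pairing
\<langle>\<phi>, h\<rangle>_{H*,H} is \<phi> h, and \<langle>h, \<phi>\<rangle>_{H,H*} = cnj (\<phi> h).\<close>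
definition antidual :: "('a::ab_group_add, 'b) hilb_scheme \<Rightarrow> ('a \<Rightarrow> complex) set" where
  "antidual H = {\<phi>. (\<forall>x y. \<phi> (x + y) = \<phi> x + \<phi> y) \<and>
                    (\<forall>c x. \<phi> (hsc H c x) = cnj c * \<phi> x) \<and>
                    (\<exists>C. \<forall>x. cmod (\<phi> x) \<le> C * hnorm H x)}"

definition hlinear_to_antidual ::
  "('a::ab_group_add, 'b) hilb_scheme \<Rightarrow> 'a set \<Rightarrow> ('a \<Rightarrow> 'c \<Rightarrow> complex) \<Rightarrow> bool" where
  "hlinear_to_antidual H D f \<longleftrightarrow> hsubspace H D \<and>
     (\<forall>x\<in>D. \<forall>y\<in>D. f (x + y) = (\<lambda>g. f x g + f y g)) \<and>
     (\<forall>c. \<forall>x\<in>D. f (hsc H c x) = (\<lambda>g. c * f x g))"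

definition pair_dual :: "('g1 \<Rightarrow> complex) \<times> ('g2 \<Rightarrow> complex) \<Rightarrow> 'g1 \<times> 'g2 \<Rightarrow> complex" where
  "pair_dual \<phi> g = fst \<phi> (fst g) + snd \<phi> (snd g)"

definition domB1 :: "'x set \<Rightarrow> ('x \<Rightarrow> 'y) \<Rightarrow> 'y set \<Rightarrow> ('y \<times> 'x) set" where
  "domB1 DA A DB = (DB \<inter> A ` DA) \<times> DA"

definition opB1 :: "('x \<Rightarrow> 'y) \<Rightarrow> ('y \<Rightarrow> 'x) \<Rightarrow> 'y \<times> 'x \<Rightarrow> 'y \<times> 'x" where
  "opB1 A B f = (A (snd f), B (fst f))"

definition domAA :: "'x set \<Rightarrow> ('x \<Rightarrow> 'y) \<Rightarrow> 'y set \<Rightarrow> ('x \<times> 'x) set" where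
  "domAA DA A DB = {(z1, z2). z1 \<in> DA \<and> z2 \<in> DA \<and> A z1 \<in> DB}"

definition Gamma0 where
  "Gamma0 A Lam1 Pi2 z = (Lam1 (snd z), Pi2 (A (fst z)))"

definition Gamma1 where
  "Gamma1 A Pi1 Lam2 z = ((\<lambda>g. - Pi1 (A (fst z)) g), Lam2 (snd z))"

definition Xi0 where
  "Xi0 Lam1 Pi2 f = (Lam1 (snd f), Pi2 (fst f))"

definition Xi1 where
  "Xi1 Pi1 Lam2 f = ((\<lambda>g. - Pi1 (fst f) g), Lam2 (snd f))"

end

theory Submission
  imports Defs
begin

locale chs = fixes H :: "('a::ab_group_add, 'b) hilb_scheme"
  assumes ch: "complex_hilbert H"
begin

lemma sc_addl: "hsc H (a + b) x = hsc H a x + hsc H b x"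
  using ch unfolding complex_hilbert_def by (elim conjE) (erule allE)+
lemma sc_addr: "hsc H a (x + y) = hsc H a x + hsc H a y"
  using ch unfolding complex_hilbert_def by blast
lemma sc_mult: "hsc H (a * b) x = hsc H a (hsc H b x)"
  using ch unfolding complex_hilbert_def by blast
lemma sc_one[simp]: "hsc H 1 x = x"
  using ch unfolding complex_hilbert_def by blast
lemma ip_addl: "hip H (x + y) z = hip H x z + hip H y z"
  using ch unfolding complex_hilbert_def by blast
lemma ip_scl: "hip H (hsc H c x) y = c * hip H x y"
  using ch unfolding complex_hilbert_def by blast
lemma ip_sym: "hip H y x = cnj (hip H x y)"
  using ch unfolding complex_hilbert_def by blast
lemma ip_pos: "x \<noteq> 0 \<Longrightarrow> Re (hip H x x) > 0"
  using ch unfolding complex_hilbert_def by blast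
lemma complete: "(\<forall>e>0. \<exists>N. \<forall>m\<ge>N. \<forall>n\<ge>N. hnorm H (s m - s n) < e) \<Longrightarrow>
          (\<exists>l. (\<lambda>n. hnorm H (s n - l)) \<longlonglongrightarrow> 0)"
  using ch unfolding complex_hilbert_def by blast

lemma sc_zero[simp]: "hsc H 0 x = 0"
proof -
  have "hsc H 0 x = hsc H 0 x + hsc H 0 x" by (metis sc_addl add_0)
  then show ?thesis by simp
qed
lemma sc_zero_r[simp]: "hsc H c 0 = 0"
proof -
  have "hsc H c 0 = hsc H c 0 + hsc H c 0" by (metis sc_addr add_0)
  then show ?thesis by simp
qed
lemma sc_neg: "hsc H (- a) x = - hsc H a x"
proof -
  have "hsc H a x + hsc H (-a) x = 0" by (metis sc_addl sc_zero add.right_inverse)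
  then show ?thesis by (simp add: eq_neg_iff_add_eq_0 add.commute)
qed
lemma sc_neg_r: "hsc H a (- x) = - hsc H a x"
proof -
  have "hsc H a x + hsc H a (-x) = 0" by (metis sc_addr sc_zero_r add.right_inverse)
  then show ?thesis by (simp add: eq_neg_iff_add_eq_0 add.commute)
qed
lemma sc_m1: "hsc H (-1) x = - x" by (simp add: sc_neg)
lemma sc_diff_r: "hsc H a (x - y) = hsc H a x - hsc H a y"
  by (metis diff_conv_add_uminus sc_addr sc_neg_r)
lemma sc_diffl: "hsc H (a - b) x = hsc H a x - hsc H b x"
  by (metis diff_conv_add_uminus sc_addl sc_neg)

lemma ip_zero_l[simp]: "hip H 0 y = 0"
proof -
  have "hip H 0 y = hip H 0 y + hip H 0 y" by (metis ip_addl add_0)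
  then show ?thesis by simp
qed
lemma ip_neg_l: "hip H (- x) y = - hip H x y"
  by (metis sc_m1 ip_scl mult_minus1)
lemma ip_diff_l: "hip H (x - y) z = hip H x z - hip H y z"
  by (metis diff_conv_add_uminus ip_addl ip_neg_l)
lemma ip_add_r: "hip H x (y + z) = hip H x y + hip H x z"
  by (metis ip_sym ip_addl complex_cnj_add)
lemma ip_sc_r: "hip H x (hsc H c y) = cnj c * hip H x y"
  by (metis ip_sym ip_scl complex_cnj_mult)
lemma ip_zero_r[simp]: "hip H x 0 = 0"
  by (metis ip_sym ip_zero_l complex_cnj_zero)
lemma ip_neg_r: "hip H x (- y) = - hip H x y"
  by (metis ip_sym ip_neg_l complex_cnj_minus)
lemma ip_diff_r: "hip H x (y - z) = hip H x y - hip H x z"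
  by (metis diff_conv_add_uminus ip_add_r ip_neg_r)

lemma ip_self: "hip H x x = complex_of_real (Re (hip H x x))"
proof -
  have "hip H x x = cnj (hip H x x)" by (rule ip_sym)
  then have "Im (hip H x x) = 0" by (metis complex_cnj_cancel_iff complex_cnj_zero_iff Im_complex_div_lemma cnj.sel(2) neg_equal_zero)
  then show ?thesis by (simp add: complex_eq_iff)
qed
lemma ip_self_nonneg: "0 \<le> Re (hip H x x)"
proof (cases "x = 0")
  case False then show ?thesis using ip_pos[OF False] by simp
next
  case True then show ?thesis by simp
qed
lemma ip_self_zero: "Re (hip H x x) = 0 \<longleftrightarrow> x = 0"
  using ip_pos by fastforce

lemma hnorm_nonneg: "0 \<le> hnorm H x" by (simp add: hnorm_def ip_self_nonneg)
lemma hnorm_sq: "(hnorm H x)^2 = Re (hip H x x)"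
  by (simp add: hnorm_def ip_self_nonneg)

lemma nsq_add: "Re (hip H (x + y) (x + y)) = Re (hip H x x) + Re (hip H y y) + 2 * Re (hip H x y)"
proof -
  have "hip H (x + y) (x + y) = hip H x x + hip H x y + cnj (hip H x y) + hip H y y"
    by (simp add: ip_addl ip_add_r ip_sym[of y x])
  then show ?thesis by simp
qed
lemma nsq_diff: "Re (hip H (x - y) (x - y)) = Re (hip H x x) + Re (hip H y y) - 2 * Re (hip H x y)"
proof -
  have "hip H (x - y) (x - y) = hip H x x - hip H x y - cnj (hip H x y) + hip H y y"
    by (simp add: ip_diff_l ip_diff_r ip_sym[of y x])
  then show ?thesis by simp
qed
lemma nsq_sc: "Re (hip H (hsc H c x) (hsc H c x)) = (cmod c)^2 * Re (hip H x x)"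
proof -
  have "hip H (hsc H c x) (hsc H c x) = (c * cnj c) * hip H x x"
    by (simp add: ip_scl ip_sc_r)
  also have "c * cnj c = complex_of_real ((cmod c)^2)" by (simp only: complex_norm_square)
  finally have "hip H (hsc H c x) (hsc H c x) = complex_of_real ((cmod c)^2) * hip H x x" .
  then show ?thesis by simp
qed

lemma cs_sq: "(cmod (hip H x y))^2 \<le> Re (hip H x x) * Re (hip H y y)"
proof (cases "y = 0")
  case True then show ?thesis by simp
next
  case False
  define r where "r = Re (hip H y y)"
  have r: "r > 0" using ip_pos[OF False] r_def by simp
  define h where "h = hip H x y"
  define t where "t = h / complex_of_real r"
  have "0 \<le> Re (hip H (x - hsc H t y) (x - hsc H t y))" by (rule ip_self_nonneg)
  also have "\<dots> = Re (hip H x x) + (cmod t)^2 * r - 2 * Re (cnj t * h)"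
    apply (subst nsq_diff) apply (subst nsq_sc) by (simp add: ip_sc_r r_def h_def)
  also have "cnj t * h = complex_of_real ((cmod h)^2 / r)"
  proof -
    have "cnj t * h = (h * cnj h) / complex_of_real r" by (simp add: t_def mult.commute)
    also have "\<dots> = complex_of_real ((cmod h)^2) / complex_of_real r" by (simp only: complex_norm_square)
    finally show ?thesis by simp
  qed
  also have "(cmod t)^2 * r = (cmod h)^2 / r"
    using r by (simp add: t_def norm_divide power2_eq_square)
  finally have "(cmod h)^2 / r \<le> Re (hip H x x)" by simp
  then show ?thesis using r by (simp add: h_def r_def[symmetric] divide_le_eq)
qed

lemma cs: "cmod (hip H x y) \<le> hnorm H x * hnorm H y"
proof -
  have "(cmod (hip H x y))^2 \<le> (hnorm H x * hnorm H y)^2"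
    using cs_sq by (simp add: power_mult_distrib hnorm_sq)
  then show ?thesis using hnorm_nonneg
    by (meson mult_nonneg_nonneg power2_le_imp_le)
qed

lemma hnorm_triangle: "hnorm H (x + y) \<le> hnorm H x + hnorm H y"
proof -
  have "Re (hip H x y) \<le> hnorm H x * hnorm H y"
    using cs[of x y] complex_Re_le_cmod order_trans by blast
  then have "(hnorm H (x + y))^2 \<le> (hnorm H x + hnorm H y)^2"
    by (simp add: hnorm_sq nsq_add power2_sum)
  then show ?thesis using hnorm_nonneg
    by (meson add_nonneg_nonneg power2_le_imp_le)
qed

lemma hnorm_sc: "hnorm H (hsc H c x) = cmod c * hnorm H x"
  by (simp add: hnorm_def nsq_sc real_sqrt_mult)

lemma hnorm_commute: "hnorm H (x - y) = hnorm H (y - x)"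
proof -
  have "x - y = hsc H (-1) (y - x)" by (simp add: sc_m1)
  then show ?thesis by (simp add: hnorm_sc)
qed

lemma dense_orth:
  assumes "hdense H D" "\<forall>x\<in>D. hip H x w = 0"
  shows "w = 0"
proof -
  have "Re (hip H w w) \<le> e * hnorm H w" if "e > 0" for e
  proof -
    obtain d where d: "d \<in> D" "hnorm H (w - d) < e" using assms(1) \<open>e>0\<close> unfolding hdense_def by blast
    have "hip H w w = hip H (w - d) w + hip H d w" by (metis ip_addl diff_add_cancel)
    then have "hip H w w = hip H (w - d) w" using assms(2) d by simp
    then have "Re (hip H w w) \<le> hnorm H (w - d) * hnorm H w"
      using cs[of "w - d" w] complex_Re_le_cmod order_trans by metis
    also have "\<dots> \<le> e * hnorm H w" using d hnorm_nonneg by (simp add: mult_right_mono)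
    finally show ?thesis .
  qed
  then have "(hnorm H w)^2 \<le> e * hnorm H w" if "e > 0" for e using that hnorm_sq by simp
  then have "hnorm H w \<le> 0"
  proof -
    assume a: "\<And>e. e > 0 \<Longrightarrow> (hnorm H w)^2 \<le> e * hnorm H w"
    show ?thesis
    proof (rule ccontr)
      assume "\<not> hnorm H w \<le> 0"
      then have p: "hnorm H w > 0" by simp
      have "(hnorm H w)^2 \<le> (hnorm H w / 2) * hnorm H w" using a[of "hnorm H w / 2"] p by simp
      moreover have "hnorm H w * hnorm H w > 0" using p by simp
      ultimately show False by (simp add: power2_eq_square)
    qed
  qed
  then have "Re (hip H w w) = 0" using hnorm_nonneg hnorm_sq
    by (metis antisym power2_eq_square mult_zero_left)
  then show ?thesis using ip_self_zero by blast
qed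

end

lemma proj_ran:
  fixes X :: "('x::ab_group_add, 'b) hilb_scheme" and Y :: "('y::ab_group_add,'c) hilb_scheme"
  assumes cX: "chs X" and cY: "chs Y"
    and lin: "hlinear_on X Y DA A" and cl: "hclosed_op X Y DA A"
    and c: "c > 0" and below: "\<forall>x\<in>DA. hnorm Y (A x) \<ge> c * hnorm X x"
  shows "\<exists>x0\<in>DA. \<forall>x\<in>DA. hip Y (A x) (v - A x0) = 0"
proof -
  interpret X: chs X by fact
  interpret Y: chs Y by fact
  have D0: "0 \<in> DA" and Dadd: "\<And>x y. x\<in>DA \<Longrightarrow> y\<in>DA \<Longrightarrow> x+y \<in> DA"
    and Dsc: "\<And>a x. x \<in> DA \<Longrightarrow> hsc X a x \<in> DA"
    and Aadd: "\<And>x y. x\<in>DA \<Longrightarrow> y\<in>DA \<Longrightarrow> A (x+y) = A x + A y"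
    and Asc: "\<And>a x. x\<in>DA \<Longrightarrow> A (hsc X a x) = hsc Y a (A x)"
    using lin unfolding hlinear_on_def hsubspace_def by auto
  have Dneg: "-x \<in> DA" if "x\<in>DA" for x using Dsc[OF that, of "-1"] by (simp add: X.sc_m1)
  have Aneg: "A (-x) = - A x" if "x\<in>DA" for x using Asc[OF that, of "-1"] by (simp add: X.sc_m1 Y.sc_m1)
  have Ddiff: "x - y \<in> DA" if "x\<in>DA" "y\<in>DA" for x y using Dadd Dneg that by (metis diff_conv_add_uminus)
  have Adiff: "A (x - y) = A x - A y" if "x\<in>DA" "y\<in>DA" for x y
    using Aadd Aneg Dneg that by (metis diff_conv_add_uminus)
  define N where "N = (\<lambda>y. Re (hip Y y y))"
  have N0: "N y \<ge> 0" for y unfolding N_def by (rule Y.ip_self_nonneg)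
  define S where "S = (\<lambda>x. N (v - A x)) ` DA"
  define d where "d = Inf S"
  have Sne: "S \<noteq> {}" using D0 S_def by auto
  have Sbdd: "bdd_below S" unfolding S_def by (rule bdd_belowI[of _ 0]) (auto simp: N0)
  have dle: "d \<le> N (v - A x)" if "x\<in>DA" for x
    unfolding d_def using that Sbdd by (auto simp: S_def intro: cInf_lower)
  have d0: "0 \<le> d" unfolding d_def using Sne by (rule cInf_greatest) (auto simp: S_def N0)
  have "\<exists>x\<in>DA. N (v - A x) < d + inverse (real (Suc n))" for n
  proof -
    have "Inf S < d + inverse (real (Suc n))" by (simp add: d_def)
    then obtain s where "s \<in> S" "s < d + inverse(real(Suc n))" using cInf_lessD[OF Sne] by blast
    then show ?thesis by (auto simp: S_def)
  qed
  then obtain s where sD: "\<And>n. s n \<in> DA" and sN: "\<And>n. N (v - A (s n)) < d + inverse (real (Suc n))"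
    by metis
  have key: "N (A (s m) - A (s n)) \<le> 2 * inverse (real (Suc m)) + 2 * inverse (real (Suc n))" for m n
  proof -
    define a where "a = v - A (s n)"
    define b where "b = v - A (s m)"
    have par: "N (a - b) + N (a + b) = 2 * N a + 2 * N b" unfolding N_def using Y.nsq_add Y.nsq_diff by simp
    define z where "z = hsc X (1/2) (s m + s n)"
    have zD: "z \<in> DA" using sD Dadd Dsc z_def by auto
    have Az: "A z = hsc Y (1/2) (A (s m) + A (s n))" using Asc Aadd sD Dadd z_def by simp
    have ab: "a + b = hsc Y 2 (v - A z)"
    proof -
      have "hsc Y 2 (v - A z) = hsc Y 2 v - (A (s m) + A (s n))"
        by (simp add: Az Y.sc_diff_r flip: Y.sc_mult)
      also have "hsc Y 2 v = v + v" using Y.sc_addl[of 1 1 v] by simp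
      finally show ?thesis by (simp add: a_def b_def algebra_simps)
    qed
    have "N (a + b) = 4 * N (v - A z)" unfolding ab N_def Y.nsq_sc by simp
    then have "N (a + b) \<ge> 4 * d" using dle[OF zD] by simp
    moreover have "a - b = A (s m) - A (s n)" by (simp add: a_def b_def)
    then have "N (A (s m) - A (s n)) + N (a + b) = 2 * N a + 2 * N b" using par by simp
    moreover have "N a < d + inverse (real (Suc n))" "N b < d + inverse (real (Suc m))"
      using sN[of m] sN[of n] by (simp_all add: a_def b_def)
    ultimately show ?thesis by linarith
  qed
  have cau: "\<exists>M. \<forall>m\<ge>M. \<forall>n\<ge>M. N (A (s m) - A (s n)) < \<epsilon>" if "\<epsilon> > 0" for \<epsilon>
  proof -
    have "\<epsilon> / 4 > 0" using that by simp
    from reals_Archimedean[OF this] obtain M where M: "inverse (real (Suc M)) < \<epsilon> / 4" by blast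
    show ?thesis
    proof (intro exI allI impI)
      fix m n assume "m \<ge> M" "n \<ge> M"
      then have "inverse (real (Suc m)) \<le> inverse (real (Suc M))" "inverse (real (Suc n)) \<le> inverse (real (Suc M))"
        by (auto intro!: le_imp_inverse_le)
      then show "N (A (s m) - A (s n)) < \<epsilon>" using key[of m n] M by linarith
    qed
  qed
  have hn_lt: "hnorm Y y < e" if "N y < e^2" "e > 0" for y e
  proof -
    have "hnorm Y y = sqrt (N y)" by (simp add: hnorm_def N_def)
    also have "\<dots> < sqrt (e^2)" by (rule real_sqrt_less_mono) fact
    also have "\<dots> = e" using that by simp
    finally show ?thesis .
  qed
  have cauY: "\<forall>e>0. \<exists>M. \<forall>m\<ge>M. \<forall>n\<ge>M. hnorm Y (A (s m) - A (s n)) < e"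
  proof (intro allI impI)
    fix e :: real assume e: "e > 0"
    then obtain M where "\<forall>m\<ge>M. \<forall>n\<ge>M. N (A (s m) - A (s n)) < e^2" using cau[of "e^2"] by auto
    then show "\<exists>M. \<forall>m\<ge>M. \<forall>n\<ge>M. hnorm Y (A (s m) - A (s n)) < e" using hn_lt e by blast
  qed
  have cauX: "\<forall>e>0. \<exists>M. \<forall>m\<ge>M. \<forall>n\<ge>M. hnorm X (s m - s n) < e"
  proof (intro allI impI)
    fix e :: real assume e: "e > 0"
    then obtain M where M: "\<forall>m\<ge>M. \<forall>n\<ge>M. N (A (s m) - A (s n)) < (c*e)^2" using cau[of "(c*e)^2"] c by auto
    show "\<exists>M. \<forall>m\<ge>M. \<forall>n\<ge>M. hnorm X (s m - s n) < e"
    proof (intro exI allI impI)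
      fix m n assume "m \<ge> M" "n \<ge> M"
      then have "hnorm Y (A (s m) - A (s n)) < c * e" using M hn_lt c e by auto
      moreover have "c * hnorm X (s m - s n) \<le> hnorm Y (A (s m) - A (s n))"
        using below Ddiff[OF sD sD] Adiff[OF sD sD] by metis
      ultimately have "c * hnorm X (s m - s n) < c * e" by linarith
      then show "hnorm X (s m - s n) < e" using c by simp
    qed
  qed
  obtain x0 where x0: "(\<lambda>n. hnorm X (s n - x0)) \<longlonglongrightarrow> 0" using X.complete cauX by blast
  obtain y0 where y0: "(\<lambda>n. hnorm Y (A (s n) - y0)) \<longlonglongrightarrow> 0" using Y.complete[of "\<lambda>n. A (s n)"] cauY by blast
  have "x0 \<in> DA \<and> A x0 = y0" using cl x0 y0 sD unfolding hclosed_op_def by blast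
  then have x0D: "x0 \<in> DA" and Ax0: "A x0 = y0" by auto
  define u where "u = v - A x0"
  have bnd: "hnorm Y u \<le> sqrt (d + inverse (real (Suc n))) + hnorm Y (A (s n) - A x0)" for n
  proof -
    have "u = (v - A (s n)) + (A (s n) - A x0)" by (simp add: u_def)
    then have "hnorm Y u \<le> hnorm Y (v - A (s n)) + hnorm Y (A (s n) - A x0)" using Y.hnorm_triangle by metis
    moreover have "hnorm Y (v - A (s n)) \<le> sqrt (d + inverse (real (Suc n)))"
      unfolding hnorm_def using sN[of n] unfolding N_def by (simp add: less_imp_le)
    ultimately show ?thesis by linarith
  qed
  have "(\<lambda>n. hnorm Y (A (s n) - A x0)) \<longlonglongrightarrow> 0" using y0 Ax0 by simp
  then have "(\<lambda>n. sqrt (d + inverse (real (Suc n))) + hnorm Y (A (s n) - A x0)) \<longlonglongrightarrow> sqrt (d + 0) + 0"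
    by (intro tendsto_intros LIMSEQ_inverse_real_of_nat)
  then have "hnorm Y u \<le> sqrt d" using bnd by (intro LIMSEQ_le_const) auto
  then have "(hnorm Y u)^2 \<le> (sqrt d)^2" using Y.hnorm_nonneg by (intro power_mono) auto
  then have Nu: "N u \<le> d" using d0 by (simp add: Y.hnorm_sq N_def)
  have umin: "N u \<le> N (u - A x)" if "x \<in> DA" for x
  proof -
    have "v - A (x0 + x) = u - A x" using Aadd[OF x0D that] by (simp add: u_def algebra_simps)
    then show ?thesis using dle[of "x0 + x"] Dadd[OF x0D that] Nu by simp
  qed
  have "hip Y (A x) u = 0" if xD: "x \<in> DA" for x
  proof -
    define w where "w = A x"
    define h where "h = hip Y u w"
    define \<epsilon> where "\<epsilon> = inverse (N w + 1)"
    have ep: "\<epsilon> > 0" using N0[of w] by (simp add: \<epsilon>_def)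
    have epN: "\<epsilon> * N w \<le> 1" using N0[of w] by (simp add: \<epsilon>_def field_simps)
    define t where "t = complex_of_real \<epsilon> * h"
    have "N u \<le> N (u - A (hsc X t x))" using umin Dsc[OF xD] by blast
    also have "A (hsc X t x) = hsc Y t w" using Asc[OF xD] w_def by simp
    also have "N (u - hsc Y t w) = N u + (cmod t)^2 * N w - 2 * Re (cnj t * h)"
      unfolding N_def apply (subst Y.nsq_diff) apply (subst Y.nsq_sc) by (simp add: Y.ip_sc_r h_def)
    also have "cnj t * h = complex_of_real (\<epsilon> * (cmod h)^2)"
    proof -
      have "cnj t * h = complex_of_real \<epsilon> * (h * cnj h)" by (simp add: t_def mult.commute)
      also have "\<dots> = complex_of_real \<epsilon> * complex_of_real ((cmod h)^2)" by (simp only: complex_norm_square)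
      finally show ?thesis by simp
    qed
    also have "(cmod t)^2 = \<epsilon>^2 * (cmod h)^2" using ep by (simp add: t_def norm_mult power_mult_distrib)
    finally have ineq: "0 \<le> \<epsilon> * (\<epsilon> * (cmod h)^2 * N w - 2 * (cmod h)^2)"
      by (simp add: algebra_simps power2_eq_square)
    define k where "k = (cmod h)^2"
    have k0: "k \<ge> 0" by (simp add: k_def)
    have "0 \<le> \<epsilon> * k * N w - 2 * k" using ineq ep unfolding k_def by (simp add: zero_le_mult_iff)
    moreover have "\<epsilon> * k * N w \<le> k" using mult_left_mono[OF epN k0] by (simp add: algebra_simps)
    ultimately have "k = 0" using k0 by linarith
    then have "h = 0" by (simp add: k_def)
    then show ?thesis by (metis Y.ip_sym h_def w_def complex_cnj_zero)
  qed
  then show ?thesis using x0D u_def by blast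
qed


lemma antidual_neg: "\<phi> \<in> antidual G \<Longrightarrow> (\<lambda>g. - \<phi> g) \<in> antidual G"
  unfolding antidual_def by auto

lemma antidual_zero: "(\<lambda>_. 0) \<in> antidual G"
  unfolding antidual_def by (auto intro: exI[of _ 0])

lemma (in chs) ip_antidual: "(\<lambda>h. hip H p h) \<in> antidual H"
  unfolding antidual_def using ip_add_r ip_sc_r cs by (auto intro!: exI[of _ "hnorm H p"])

theorem lemma3p4:
  fixes X :: "('x::ab_group_add) hilb" and Y :: "('y::ab_group_add) hilb"
    and G1 :: "('g1::ab_group_add) hilb" and G2 :: "('g2::ab_group_add) hilb"
    and DA :: "'x set" and A :: "'x \<Rightarrow> 'y"
    and DB :: "'y set" and B :: "'y \<Rightarrow> 'x"
    and Lam1 :: "'x \<Rightarrow> 'g1" and Lam2 :: "'x \<Rightarrow> 'g2 \<Rightarrow> complex"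
    and Pi1 :: "'y \<Rightarrow> 'g1 \<Rightarrow> complex" and Pi2 :: "'y \<Rightarrow> 'g2"
  assumes hX: "complex_hilbert X" and hY: "complex_hilbert Y"
    and hG1: "complex_hilbert G1" and hG2: "complex_hilbert G2"
    and A_lin: "hlinear_on X Y DA A" and A_closed: "hclosed_op X Y DA A"
    and A_dense: "hdense X DA"
    and A_below: "\<exists>c>0. \<forall>x\<in>DA. hnorm Y (A x) \<ge> c * hnorm X x"
    and B_lin: "hlinear_on Y X DB B" and B_closed: "hclosed_op Y X DB B"
    and B_dense: "hdense Y DB"
    and AB_adj: "adj_subset_neg X Y DA A DB B"
    and Lam1_lin: "hlinear_on X G1 DA Lam1"
    and Lam2_lin: "hlinear_to_antidual X DA Lam2"
    and Lam2_into: "Lam2 ` DA \<subseteq> antidual G2"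
    and Lam_surj: "(\<lambda>x. (Lam1 x, Lam2 x)) ` DA = UNIV \<times> antidual G2"
    and Pi1_lin: "hlinear_to_antidual Y DB Pi1"
    and Pi1_into: "Pi1 ` DB \<subseteq> antidual G1"
    and Pi2_lin: "hlinear_on Y G2 DB Pi2"
    and Pi_surj: "(\<lambda>y. (Pi1 y, Pi2 y)) ` DB = antidual G1 \<times> UNIV"
    and green: "\<And>y x. y \<in> DB \<Longrightarrow> x \<in> DA \<Longrightarrow>
       - hip X (B y) x - hip Y y (A x) = Pi1 y (Lam1 x) - cnj (Lam2 x (Pi2 y))"
  shows "(\<lambda>f. (Xi0 Lam1 Pi2 f, Xi1 Pi1 Lam2 f)) ` domB1 DA A DB
           = UNIV \<times> (antidual G1 \<times> antidual G2)
    \<and> (\<forall>f\<in>domB1 DA A DB. \<forall>g\<in>domB1 DA A DB.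
         hip Y (fst (opB1 A B f)) (fst g) + hip X (snd (opB1 A B f)) (snd g)
       + (hip Y (fst f) (fst (opB1 A B g)) + hip X (snd f) (snd (opB1 A B g)))
       = pair_dual (Xi1 Pi1 Lam2 f) (Xi0 Lam1 Pi2 g)
       + cnj (pair_dual (Xi1 Pi1 Lam2 g) (Xi0 Lam1 Pi2 f)))
    \<and> domB1 DA A DB = (\<lambda>z. (A (fst z), snd z)) ` domAA DA A DB
    \<and> (\<forall>z\<in>domAA DA A DB.
         Xi0 Lam1 Pi2 (A (fst z), snd z) = Gamma0 A Lam1 Pi2 z
       \<and> Xi1 Pi1 Lam2 (A (fst z), snd z) = Gamma1 A Pi1 Lam2 z)"
  proof -
  interpret X: chs X by (rule chs.intro) (rule hX)
  interpret Y: chs Y by (rule chs.intro) (rule hY)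
  interpret G1: chs G1 by (rule chs.intro) (rule hG1)
  interpret G2: chs G2 by (rule chs.intro) (rule hG2)
  obtain c where c: "c > 0" "\<forall>x\<in>DA. hnorm Y (A x) \<ge> c * hnorm X x" using A_below by blast
  have DBadd: "\<And>x y. x\<in>DB \<Longrightarrow> y\<in>DB \<Longrightarrow> x+y \<in> DB"
    and DBsc: "\<And>a x. x \<in> DB \<Longrightarrow> hsc Y a x \<in> DB"
    using B_lin unfolding hlinear_on_def hsubspace_def by auto
  have Pi1add: "\<And>y y'. y\<in>DB \<Longrightarrow> y'\<in>DB \<Longrightarrow> Pi1 (y + y') = (\<lambda>g. Pi1 y g + Pi1 y' g)"
    using Pi1_lin unfolding hlinear_to_antidual_def by auto
  have Pi2add: "\<And>y y'. y\<in>DB \<Longrightarrow> y'\<in>DB \<Longrightarrow> Pi2 (y + y') = Pi2 y + Pi2 y'"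
    using Pi2_lin unfolding hlinear_on_def by auto
  have keyv: "\<exists>x0\<in>DA. A x0 \<in> DB \<and> Pi1 (A x0) = Pi1 v \<and> Pi2 (A x0) = Pi2 v" if vD: "v \<in> DB" for v
  proof -
    obtain x0 where x0D: "x0 \<in> DA" and orth: "\<forall>x\<in>DA. hip Y (A x) (v - A x0) = 0"
      using proj_ran[OF chs.intro[OF hX] chs.intro[OF hY] A_lin A_closed c] by blast
    define u where "u = v - A x0"
    have uadj: "u \<in> adj_dom X Y DA A"
      unfolding adj_dom_def using orth u_def by (auto intro!: exI[of _ 0])
    have adj0: "adj_op X Y DA A u = 0"
      unfolding adj_op_def
    proof (rule the_equality)
      show "\<forall>x\<in>DA. hip Y (A x) u = hip X x 0" using orth u_def by simp
    next
      fix w assume "\<forall>x\<in>DA. hip Y (A x) u = hip X x w"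
      then have "\<forall>x\<in>DA. hip X x w = 0" using orth u_def by simp
      then show "w = 0" by (rule X.dense_orth[OF A_dense])
    qed
    have uDB: "u \<in> DB" and Bu: "B u = 0"
      using AB_adj uadj adj0 unfolding adj_subset_neg_def by auto
    have gr: "Pi1 u (Lam1 x) = cnj (Lam2 x (Pi2 u))" if "x \<in> DA" for x
    proof -
      have "hip Y u (A x) = 0" using orth that u_def by (metis Y.ip_sym complex_cnj_zero)
      then show ?thesis using green[OF uDB that] Bu by simp
    qed
    have Pi1u: "Pi1 u = (\<lambda>_. 0)"
    proof
      fix g
      have "(g, \<lambda>_. 0) \<in> (\<lambda>x. (Lam1 x, Lam2 x)) ` DA" using Lam_surj antidual_zero by auto
      then obtain x where "x \<in> DA" "Lam1 x = g" "Lam2 x = (\<lambda>_. 0)" by auto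
      then show "Pi1 u g = 0" using gr by fastforce
    qed
    have Pi2u: "Pi2 u = 0"
    proof -
      have "(0, \<lambda>h. hip G2 (Pi2 u) h) \<in> (\<lambda>x. (Lam1 x, Lam2 x)) ` DA" using Lam_surj G2.ip_antidual by auto
      then obtain x where "x \<in> DA" "Lam1 x = 0" "Lam2 x = (\<lambda>h. hip G2 (Pi2 u) h)" by auto
      then have "cnj (hip G2 (Pi2 u) (Pi2 u)) = 0" using gr[of x] Pi1u by simp
      then have "Re (hip G2 (Pi2 u) (Pi2 u)) = 0" by simp
      then show ?thesis using G2.ip_self_zero by blast
    qed
    have "A x0 = v + hsc Y (-1) u" by (simp add: Y.sc_m1 u_def)
    then have AxDB: "A x0 \<in> DB" using DBadd DBsc vD uDB by metis
    have vsplit: "v = A x0 + u" by (simp add: u_def)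
    have "Pi1 v = Pi1 (A x0)" using Pi1add[OF AxDB uDB] Pi1u vsplit by simp
    moreover have "Pi2 v = Pi2 (A x0)" using Pi2add[OF AxDB uDB] Pi2u vsplit by simp
    ultimately show ?thesis using x0D AxDB by auto
  qed
  have P1: "(\<lambda>f. (Xi0 Lam1 Pi2 f, Xi1 Pi1 Lam2 f)) ` domB1 DA A DB = UNIV \<times> (antidual G1 \<times> antidual G2)"
  proof (intro equalityI subsetI)
    fix p assume "p \<in> (\<lambda>f. (Xi0 Lam1 Pi2 f, Xi1 Pi1 Lam2 f)) ` domB1 DA A DB"
    then obtain v w where "v \<in> DB" "w \<in> DA" and p: "p = (Xi0 Lam1 Pi2 (v, w), Xi1 Pi1 Lam2 (v, w))"
      unfolding domB1_def by auto
    then show "p \<in> UNIV \<times> (antidual G1 \<times> antidual G2)"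
      using Pi1_into Lam2_into antidual_neg unfolding Xi1_def by auto
  next
    fix p :: "('g1 \<times> 'g2) \<times> ('g1 \<Rightarrow> complex) \<times> ('g2 \<Rightarrow> complex)"
    assume "p \<in> UNIV \<times> (antidual G1 \<times> antidual G2)"
    then obtain g1 g2 \<phi>1 \<phi>2 where p: "p = ((g1, g2), (\<phi>1, \<phi>2))" and ph1: "\<phi>1 \<in> antidual G1"
      and ph2: "\<phi>2 \<in> antidual G2" by auto
    have "(g1, \<phi>2) \<in> (\<lambda>x. (Lam1 x, Lam2 x)) ` DA" using Lam_surj ph2 by auto
    then obtain w where wD: "w \<in> DA" "Lam1 w = g1" "Lam2 w = \<phi>2" by auto
    have "((\<lambda>g. - \<phi>1 g), g2) \<in> (\<lambda>y. (Pi1 y, Pi2 y)) ` DB" using Pi_surj antidual_neg[OF ph1] by auto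
    then obtain v where vD: "v \<in> DB" "Pi1 v = (\<lambda>g. - \<phi>1 g)" "Pi2 v = g2" by auto
    obtain x0 where x0: "x0 \<in> DA" "A x0 \<in> DB" "Pi1 (A x0) = Pi1 v" "Pi2 (A x0) = Pi2 v"
      using keyv[OF vD(1)] by blast
    have "(A x0, w) \<in> domB1 DA A DB" using x0 wD unfolding domB1_def by auto
    moreover have "p = (Xi0 Lam1 Pi2 (A x0, w), Xi1 Pi1 Lam2 (A x0, w))"
      using p wD vD x0 unfolding Xi0_def Xi1_def by simp
    ultimately show "p \<in> (\<lambda>f. (Xi0 Lam1 Pi2 f, Xi1 Pi1 Lam2 f)) ` domB1 DA A DB" by blast
  qed
  have P2: "\<forall>f\<in>domB1 DA A DB. \<forall>g\<in>domB1 DA A DB.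
         hip Y (fst (opB1 A B f)) (fst g) + hip X (snd (opB1 A B f)) (snd g)
       + (hip Y (fst f) (fst (opB1 A B g)) + hip X (snd f) (snd (opB1 A B g)))
       = pair_dual (Xi1 Pi1 Lam2 f) (Xi0 Lam1 Pi2 g)
       + cnj (pair_dual (Xi1 Pi1 Lam2 g) (Xi0 Lam1 Pi2 f))"
  proof (intro ballI)
    fix f g assume f: "f \<in> domB1 DA A DB" and g: "g \<in> domB1 DA A DB"
    obtain v w where fv: "f = (v, w)" "v \<in> DB" "w \<in> DA" using f unfolding domB1_def by auto
    obtain v' w' where gv: "g = (v', w')" "v' \<in> DB" "w' \<in> DA" using g unfolding domB1_def by auto
    have e1: "hip X (B v) w' + hip Y v (A w') = - Pi1 v (Lam1 w') + cnj (Lam2 w' (Pi2 v))"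
      using green[OF fv(2) gv(3)] by (simp add: algebra_simps)
    have e2: "hip X (B v') w + hip Y v' (A w) = - Pi1 v' (Lam1 w) + cnj (Lam2 w (Pi2 v'))"
      using green[OF gv(2) fv(3)] by (simp add: algebra_simps)
    have e2': "hip X w (B v') + hip Y (A w) v' = cnj (- Pi1 v' (Lam1 w)) + Lam2 w (Pi2 v')"
    proof -
      have "cnj (hip X (B v') w + hip Y v' (A w)) = cnj (- Pi1 v' (Lam1 w) + cnj (Lam2 w (Pi2 v')))"
        using e2 by simp
      then show ?thesis by (simp add: X.ip_sym[of w] Y.ip_sym[of "A w"])
    qed
    show "hip Y (fst (opB1 A B f)) (fst g) + hip X (snd (opB1 A B f)) (snd g)
       + (hip Y (fst f) (fst (opB1 A B g)) + hip X (snd f) (snd (opB1 A B g)))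
       = pair_dual (Xi1 Pi1 Lam2 f) (Xi0 Lam1 Pi2 g)
       + cnj (pair_dual (Xi1 Pi1 Lam2 g) (Xi0 Lam1 Pi2 f))" (is "?L = ?R")
    proof -
      have "?L = (hip X (B v) w' + hip Y v (A w')) + (hip X w (B v') + hip Y (A w) v')"
        unfolding fv(1) gv(1) opB1_def by (simp add: algebra_simps)
      also have "\<dots> = (- Pi1 v (Lam1 w') + cnj (Lam2 w' (Pi2 v))) + (cnj (- Pi1 v' (Lam1 w)) + Lam2 w (Pi2 v'))"
        by (simp only: e1 e2')
      also have "\<dots> = ?R"
        unfolding fv(1) gv(1) pair_dual_def Xi0_def Xi1_def by (simp add: algebra_simps)
      finally show ?thesis .
    qed
  qed
  have P3: "domB1 DA A DB = (\<lambda>z. (A (fst z), snd z)) ` domAA DA A DB"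
    unfolding domB1_def domAA_def by force
  have P4: "\<forall>z\<in>domAA DA A DB.
         Xi0 Lam1 Pi2 (A (fst z), snd z) = Gamma0 A Lam1 Pi2 z
       \<and> Xi1 Pi1 Lam2 (A (fst z), snd z) = Gamma1 A Pi1 Lam2 z"
    unfolding Xi0_def Gamma0_def Xi1_def Gamma1_def by simp
  show ?thesis using P1 P2 P3 P4 by blast
qed

end
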